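(* For every integer $m\ge 0$, $$\int_0^{\pi/2}x^{2m}\frac{\ln(\sin x)}{\cos x}\,dx=2(2m)!\sum_{j=0}^m\frac{(-1)^{j-1}}{(2m-2j)!}\left(\frac{\pi}{2}\right)^{2m-2j}\sum_{k=0}^{2j}(-1)^k\,\beta(k+1)\,\beta(2j-k+1).$$
   Context: The Dirichlet beta function is $\beta(r)=\sum_{k=1}^\infty \frac{(-1)^{k-1}}{(2k-1)^r}$ for integers $r\ge1$. *)

theory Defs
  imports "HOL-Analysis.Analysis"
begin

text \<open>Dirichlet beta function: beta r = sum over k >= 1 of (-1)^(k-1) / (2k-1)^r,
  written with the shifted index k' = k - 1 >= 0.\<close>
definition dirichlet_beta :: "nat \<Rightarrow> real" where
  "dirichlet_beta r = (\<Sum>k. (-1) ^ k / (2 * real k + 1) ^ r)"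

end

theory Submission
  imports Defs
begin

lemma mom_step:
  fixes a L :: real and p :: nat
  assumes "cos (a*L) = 0" "a \<noteq> 0" "L \<ge> 0" "p \<ge> 2"
  assumes IH: "((\<lambda>x. x^(p-2) * cos (a*x)) has_integral C) {0..L}"
  shows "((\<lambda>x. x^p * cos (a*x)) has_integral (L^p * sin (a*L) / a - real p * real (p-1) / a^2 * C)) {0..L}"
proof -
  define \<Phi> where "\<Phi> x = x^p * sin (a*x) / a + real p * x^(p-1) * cos (a*x) / a^2" for x :: real
  obtain q where q: "p = Suc (Suc q)" using assms(4) by (metis add_2_eq_Suc le_Suc_ex)
  have d: "(\<Phi> has_real_derivative (x^p * cos (a*x) + real p * real (p-1) / a^2 * (x^(p-2) * cos (a*x)))) (at x)" for x
  proof -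
    have "(\<Phi> has_real_derivative
      ((real p * x^(p-1) * sin (a*x) + x^p * (cos (a*x) * a)) / a
       + (real p * (real (p-1) * x^(p-1-1)) * cos (a*x) + real p * x^(p-1) * (- sin (a*x) * a)) / a^2)) (at x)"
      unfolding \<Phi>_def using assms(2)
      by (auto intro!: derivative_eq_intros) (simp add: field_simps eval_nat_numeral)
    moreover have "((real p * x^(p-1) * sin (a*x) + x^p * (cos (a*x) * a)) / a
       + (real p * (real (p-1) * x^(p-1-1)) * cos (a*x) + real p * x^(p-1) * (- sin (a*x) * a)) / a^2)
       = x^p * cos (a*x) + real p * real (p-1) / a^2 * (x^(p-2) * cos (a*x))"
    proof -
      have e: "p-1-1 = q" "p - 2 = q" "p - 1 = Suc q" using q by auto
      show ?thesis unfolding e using assms(2) by (simp add: field_simps power2_eq_square)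
    qed
    ultimately show ?thesis by simp
  qed
  have "((\<lambda>x. x^p * cos (a*x) + real p * real (p-1) / a^2 * (x^(p-2) * cos (a*x))) has_integral (\<Phi> L - \<Phi> 0)) {0..L}"
    by (rule fundamental_theorem_of_calculus) (use assms d in \<open>auto simp: has_real_derivative_iff_has_vector_derivative[symmetric] intro: has_field_derivative_at_within\<close>)
  from has_integral_diff[OF this has_integral_cmul[OF IH, of "real p * real (p-1) / a^2"]]
  have "((\<lambda>x. x^p * cos (a*x)) has_integral (\<Phi> L - \<Phi> 0 - real p * real (p-1) / a^2 * C)) {0..L}"
    by simp
  moreover have "\<Phi> L - \<Phi> 0 = L^p * sin (a*L) / a"
    using assms by (simp add: \<Phi>_def)
  ultimately show ?thesis by simp
qed

lemma mom:
  fixes a L :: real and m :: nat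
  assumes "cos (a*L) = 0" "a \<noteq> 0" "L \<ge> 0"
  shows "((\<lambda>x. x^(2*m) * cos (a*x)) has_integral
     (\<Sum>j=0..m. (-1)^j * fact (2*m) / fact (2*m-2*j) * L^(2*m-2*j) * sin (a*L) / a^(2*j+1))) {0..L}"
proof (induction m)
  case 0
  have "((\<lambda>x. cos (a*x)) has_integral (sin (a*L)/a - sin (a*0)/a)) {0..L}"
  proof (rule fundamental_theorem_of_calculus)
    show "((\<lambda>x. sin (a*x)/a) has_vector_derivative cos (a*x)) (at x within {0..L})" for x
      unfolding has_real_derivative_iff_has_vector_derivative[symmetric]
      using assms(2) by (auto intro!: derivative_eq_intros)
  qed (use assms in auto)
  then show ?case by simp
next
  case (Suc m)
  have "((\<lambda>x. x^(2*Suc m) * cos (a*x)) has_integral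
    (L^(2*Suc m) * sin (a*L) / a - real (2*Suc m) * real (2*Suc m-1) / a^2 *
      (\<Sum>j=0..m. (-1)^j * fact (2*m) / fact (2*m-2*j) * L^(2*m-2*j) * sin (a*L) / a^(2*j+1)))) {0..L}"
    by (rule mom_step) (use assms Suc in auto)
  moreover have "L^(2*Suc m) * sin (a*L) / a - real (2*Suc m) * real (2*Suc m-1) / a^2 *
      (\<Sum>j=0..m. (-1)^j * fact (2*m) / fact (2*m-2*j) * L^(2*m-2*j) * sin (a*L) / a^(2*j+1))
    = (\<Sum>j=0..Suc m. (-1)^j * fact (2*Suc m) / fact (2*Suc m-2*j) * L^(2*Suc m-2*j) * sin (a*L) / a^(2*j+1))"
  proof -
    have f: "fact (2*Suc m) = (real (2*Suc m) * real (2*Suc m - 1)) * (fact (2*m) :: real)"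
      by (simp add: fact_Suc algebra_simps)
    have "(\<Sum>j=0..Suc m. (-1)^j * fact (2*Suc m) / fact (2*Suc m-2*j) * L^(2*Suc m-2*j) * sin (a*L) / a^(2*j+1))
      = L^(2*Suc m) * sin (a*L) / a + (\<Sum>j=0..m. (-1)^(Suc j) * fact (2*Suc m) / fact (2*Suc m-2*Suc j) * L^(2*Suc m-2*Suc j) * sin (a*L) / a^(2*Suc j+1))"
      by (subst sum.atLeast0_atMost_Suc_shift) simp
    also have "(\<Sum>j=0..m. (-1)^(Suc j) * fact (2*Suc m) / fact (2*Suc m-2*Suc j) * L^(2*Suc m-2*Suc j) * sin (a*L) / a^(2*Suc j+1))
       = - (real (2*Suc m) * real (2*Suc m-1) / a^2) * (\<Sum>j=0..m. (-1)^j * fact (2*m) / fact (2*m-2*j) * L^(2*m-2*j) * sin (a*L) / a^(2*j+1))"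
      unfolding sum_distrib_left
      by (rule sum.cong) (use assms(2) in \<open>simp_all add: f field_simps power2_eq_square\<close>)
    finally show ?thesis by simp
  qed
  ultimately show ?case by simp
qed

definition DD :: "real \<Rightarrow> real \<Rightarrow> real" where
  "DD x y = 1 - 2*y*cos (2*x) + y^2"

lemma DD_pos: assumes "0 \<le> y" "y < 1" shows "DD x y > 0"
proof -
  have "DD x y = (1-y)^2 + 2*y*(1 - cos (2*x))" unfolding DD_def by (simp add: power2_eq_square algebra_simps)
  moreover have "(1-y)^2 > 0" using assms by simp
  moreover have "2*y*(1 - cos (2*x)) \<ge> 0" using assms by simp
  ultimately show ?thesis by linarith
qed

lemma geo_cos:
  fixes x y :: real
  assumes "0 \<le> y" "y < 1"
  shows "(\<lambda>n. y^n * cos ((2*real n+1)*x)) sums ((1-y)*cos x / DD x y)"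
proof -
  let ?z = "complex_of_real y * cis (2*x)"
  have nz: "norm ?z < 1" using assms by (simp add: norm_mult)
  have "(\<lambda>n. ?z^n) sums (1/(1 - ?z))" using geometric_sums[OF nz] by simp
  from sums_mult[OF this, of "cis x"]
  have "(\<lambda>n. cis x * ?z^n) sums (cis x * (1/(1 - ?z)))" .
  from sums_Re[OF this] have "(\<lambda>n. Re (cis x * ?z^n)) sums Re (cis x / (1 - ?z))" by simp
  moreover have "Re (cis x * ?z^n) = y^n * cos ((2*real n+1)*x)" for n
  proof -
    have c: "cis (2*x) ^ n = cis (real n * (2*x))" by (rule Complex.DeMoivre)
    have "cis x * cis (real n * (2*x)) = cis ((2*real n+1)*x)" unfolding cis_mult by (simp add: algebra_simps)
    then have "cis x * ?z^n = complex_of_real (y^n) * cis ((2*real n+1)*x)"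
      by (simp add: power_mult_distrib c)
    then show ?thesis by simp
  qed
  moreover have "Re (cis x / (1 - ?z)) = (1-y)*cos x / DD x y"
  proof -
    have num: "cos x * (1 - y * cos (2*x)) + sin x * (- (y * sin (2*x))) = (1-y) * cos x"
    proof -
      have "cos (2*x - x) = cos (2*x) * cos x + sin (2*x) * sin x" by (rule cos_diff)
      then have "cos x * cos (2*x) + sin x * sin (2*x) = cos x" by (simp add: mult.commute)
      moreover have "cos x * (1 - y * cos (2*x)) + sin x * (- (y * sin (2*x))) = cos x - y * (cos x * cos (2*x) + sin x * sin (2*x))"
        by (simp add: algebra_simps)
      ultimately show ?thesis by (simp add: algebra_simps)
    qed
    have den: "(1 - y * cos (2*x))^2 + (y * sin (2*x))^2 = DD x y"
    proof -
      have g: "(1 - y * c)^2 + (y * s)^2 = 1 - 2*y*c + y^2 * (s^2 + c^2)" for c s :: real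
        by (simp add: power2_eq_square algebra_simps)
      show ?thesis unfolding DD_def g sin_cos_squared_add by simp
    qed
    show ?thesis unfolding Re_divide using num den by simp
  qed
  ultimately show ?thesis by simp
qed

definition MM :: "nat \<Rightarrow> nat \<Rightarrow> real" where
  "MM m n = (\<Sum>j=0..m. (-1)^j * fact (2*m) / fact (2*m-2*j) * (pi/2)^(2*m-2*j) * (-1)^n / (2*real n+1)^(2*j+1))"

lemma cos_odd_half: "cos ((2*real n+1) * (pi/2)) = 0"
proof -
  have e: "(2*real n+1) * (pi/2) = real n * pi + pi/2" by (simp add: algebra_simps)
  show ?thesis unfolding e cos_add by simp
qed

lemma sin_odd_half: "sin ((2*real n+1) * (pi/2)) = (-1)^n"
proof -
  have e: "(2*real n+1) * (pi/2) = real n * pi + pi/2" by (simp add: algebra_simps)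
  show ?thesis unfolding e sin_add by simp
qed

lemma MM_integral: "((\<lambda>x. x^(2*m) * cos ((2*real n+1)*x)) has_integral MM m n) {0..pi/2}"
proof -
  have "((\<lambda>x. x^(2*m) * cos ((2*real n+1)*x)) has_integral
     (\<Sum>j=0..m. (-1)^j * fact (2*m) / fact (2*m-2*j) * (pi/2)^(2*m-2*j) * sin ((2*real n+1)*(pi/2)) / (2*real n+1)^(2*j+1))) {0..pi/2}"
    by (rule mom) (use cos_odd_half in auto)
  then show ?thesis unfolding MM_def sin_odd_half by (simp add: mult.assoc)
qed

definition KK :: "nat \<Rightarrow> real" where
  "KK m = (\<Sum>j=0..m. fact (2*m) / fact (2*m-2*j) * (pi/2)^(2*m-2*j))"

lemma MM_bound: "\<bar>MM m n\<bar> \<le> KK m / (2*real n+1)"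
proof -
  have "\<bar>MM m n\<bar> \<le> (\<Sum>j=0..m. \<bar>(-1)^j * fact (2*m) / fact (2*m-2*j) * (pi/2)^(2*m-2*j) * (-1)^n / (2*real n+1)^(2*j+1)\<bar>)"
    unfolding MM_def by (rule sum_abs)
  also have "\<dots> \<le> (\<Sum>j=0..m. fact (2*m) / fact (2*m-2*j) * (pi/2)^(2*m-2*j) / (2*real n+1))"
  proof (rule sum_mono)
    fix j assume "j \<in> {0..m}"
    have a: "(2*real n+1)^(2*j+1) \<ge> 2*real n+1"
      by (rule self_le_power) auto
    have "\<bar>(-1)^j * fact (2*m) / fact (2*m-2*j) * (pi/2)^(2*m-2*j) * (-1)^n / (2*real n+1)^(2*j+1)\<bar>
       = fact (2*m) / fact (2*m-2*j) * (pi/2)^(2*m-2*j) / (2*real n+1)^(2*j+1)"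
      by (simp add: abs_mult power_abs)
    also have "\<dots> \<le> fact (2*m) / fact (2*m-2*j) * (pi/2)^(2*m-2*j) / (2*real n+1)"
      by (rule divide_left_mono) (use a in auto)
    finally show "\<bar>(-1)^j * fact (2*m) / fact (2*m-2*j) * (pi/2)^(2*m-2*j) * (-1)^n / (2*real n+1)^(2*j+1)\<bar>
       \<le> fact (2*m) / fact (2*m-2*j) * (pi/2)^(2*m-2*j) / (2*real n+1)" .
  qed
  also have "\<dots> = KK m / (2*real n+1)" unfolding KK_def sum_divide_distrib ..
  finally show ?thesis .
qed

lemma inner_x:
  fixes y :: real
  assumes "0 \<le> y" "y < 1"
  shows "((\<lambda>x. x^(2*m) * ((1-y)*cos x / DD x y)) has_integral (\<Sum>n. y^n * MM m n)) {0..pi/2}"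
    "(\<lambda>n. y^n * MM m n) sums (\<Sum>n. y^n * MM m n)"
proof -
  define f where "f N x = (\<Sum>n<N. y^n * (x^(2*m) * cos ((2*real n+1)*x)))" for N x
  define g where "g x = x^(2*m) * ((1-y)*cos x / DD x y)" for x
  have fi: "(f N has_integral (\<Sum>n<N. y^n * MM m n)) {0..pi/2}" for N
    unfolding f_def by (intro has_integral_sum has_integral_mult_right MM_integral) auto
  have bnd: "norm (f N x) \<le> (pi/2)^(2*m) / (1-y)" if "x \<in> {0..pi/2}" for N x
  proof -
    have "norm (f N x) \<le> (\<Sum>n<N. y^n * (pi/2)^(2*m))"
      unfolding f_def
    proof (rule order_trans[OF norm_sum sum_mono])
      fix n assume "n \<in> {..<N}"
      have "\<bar>x^(2*m) * cos ((2*real n+1)*x)\<bar> \<le> (pi/2)^(2*m) * 1"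
        unfolding abs_mult using that by (intro mult_mono) (auto simp: power_abs intro!: power_mono)
      then show "norm (y^n * (x^(2*m) * cos ((2*real n+1)*x))) \<le> y^n * (pi/2)^(2*m)"
        using assms by (simp add: abs_mult mult_left_mono)
    qed
    also have "\<dots> = (\<Sum>n<N. y^n) * (pi/2)^(2*m)" by (simp add: sum_distrib_right)
    also have "\<dots> \<le> (1/(1-y)) * (pi/2)^(2*m)"
    proof (rule mult_right_mono)
      have "(\<Sum>n<N. y^n) \<le> (\<Sum>n. y^n)"
        by (rule sum_le_suminf) (use assms in \<open>auto intro: summable_geometric\<close>)
      then show "(\<Sum>n<N. y^n) \<le> 1/(1-y)" using suminf_geometric[of y] assms by simp
    qed auto
    finally show ?thesis by simp
  qed
  have conv: "(\<lambda>N. f N x) \<longlonglongrightarrow> g x" for x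
  proof -
    have "(\<lambda>n. x^(2*m) * (y^n * cos ((2*real n+1)*x))) sums (x^(2*m) * ((1-y)*cos x / DD x y))"
      by (rule sums_mult[OF geo_cos[OF assms]])
    then show ?thesis unfolding f_def g_def sums_def by (simp add: algebra_simps)
  qed
  have hint: "(\<lambda>x. (pi/2)^(2*m) / (1-y)) integrable_on {0..pi/2}" by (rule integrable_const_ivl)
  note dc = dominated_convergence[of f "{0..pi/2}" "\<lambda>x. (pi/2)^(2*m) / (1-y)" g, OF _ hint bnd conv]
  have fint: "\<And>k. f k integrable_on {0..pi/2}" using fi by blast
  have gi: "g integrable_on {0..pi/2}" using dc(1)[OF fint] .
  have lim: "(\<lambda>N. (\<Sum>n<N. y^n * MM m n)) \<longlonglongrightarrow> integral {0..pi/2} g"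
  proof -
    have "integral {0..pi/2} (f N) = (\<Sum>n<N. y^n * MM m n)" for N using fi by (rule integral_unique)
    then show ?thesis using dc(2)[OF fint] by simp
  qed
  then have s: "(\<lambda>n. y^n * MM m n) sums integral {0..pi/2} g" unfolding sums_def .
  then show "(\<lambda>n. y^n * MM m n) sums (\<Sum>n. y^n * MM m n)" using sums_unique by fastforce
  show "((\<lambda>x. x^(2*m) * ((1-y)*cos x / DD x y)) has_integral (\<Sum>n. y^n * MM m n)) {0..pi/2}"
  proof -
    have "(g has_integral integral {0..pi/2} g) {0..pi/2}" using gi by (rule integrable_integral)
    then show ?thesis using sums_unique[OF s] unfolding g_def by simp
  qed
qed

lemma alg: fixes y k E :: real assumes "1+y \<noteq> 0" "E \<noteq> 0" "k \<noteq> 0" "E = 2*k^2*(1-y) + (y - (2*k^2-1))*(1+y)"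
shows "(1/(1+y) - ((2*y - 2*(2*k^2-1))/E)/2)/(2*k) = (1-y)*k/((1+y)*E)"
proof -
  have nz: "(1+y)*E \<noteq> 0" using assms by simp
  have a: "1/(1+y) * ((1+y)*E) = E" using assms(1) by simp
  have b: "((2*y - 2*(2*k^2-1))/E)/2 * ((1+y)*E) = (y - (2*k^2-1))*(1+y)" using assms(2) by simp
  have "(1/(1+y) - ((2*y - 2*(2*k^2-1))/E)/2) * ((1+y)*E) = E - (y - (2*k^2-1))*(1+y)"
    unfolding left_diff_distrib a b ..
  then have "(1/(1+y) - ((2*y - 2*(2*k^2-1))/E)/2) = (E - (y - (2*k^2-1))*(1+y))/((1+y)*E)"
    using nz by (simp add: eq_divide_eq)
  also have "\<dots> = 2*k^2*(1-y)/((1+y)*E)" using assms(4) by simp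
  finally have "(1/(1+y) - ((2*y - 2*(2*k^2-1))/E)/2)/(2*k) = 2*k^2*(1-y)/((1+y)*E)/(2*k)" by simp
  also have "\<dots> = ((1-y)*k * (2*k))/(((1+y)*E) * (2*k))" by (simp add: power2_eq_square mult_ac)
  also have "\<dots> = (1-y)*k/((1+y)*E)" using assms(3) by (rule mult_divide_mult_cancel_right[where c="2*k", simplified] | simp)
  finally show ?thesis .
qed

definition hh :: "real \<Rightarrow> real \<Rightarrow> real" where
  "hh x y = (1-y)*cos x / ((1+y) * DD x y)"

lemma y_integral:
  fixes x :: real
  assumes x: "0 < x" "x < pi/2"
  shows "(hh x has_integral (- ln (sin x) / (2 * cos x))) {0..1}"
proof -
  have cx: "cos x > 0" using x by (intro cos_gt_zero) auto
  have sx: "sin x > 0" using x by (intro sin_gt_zero) auto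
  define c where "c = cos (2*x)"
  have c1: "1 + c = 2 * (cos x)^2" unfolding c_def cos_double_cos by simp
  have c2: "2 - 2*c = 4 * (sin x)^2" unfolding c_def cos_double_sin by simp
  define \<Psi> where "\<Psi> y = (ln (1+y) - ln (DD x y) / 2) / (2 * cos x)" for y
  have D: "DD x y > 0" if "y \<in> {0..1}" for y
  proof (cases "y < 1")
    case True then show ?thesis using that DD_pos by auto
  next
    case False
    then have "y = 1" using that by auto
    then show ?thesis unfolding DD_def using c2 sx unfolding c_def by simp
  qed
  have deriv: "(\<Psi> has_real_derivative hh x y) (at y within {0..1})" if y: "y \<in> {0..1}" for y
  proof -
    have Dy: "DD x y > 0" using D y .
    have dD: "((\<lambda>y. DD x y) has_real_derivative (2*y - 2*c)) (at y within {0..1})"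
      unfolding DD_def c_def by (auto intro!: derivative_eq_intros)
    have "(\<Psi> has_real_derivative (1/(1+y) - ((2*y - 2*c)/DD x y)/2) / (2*cos x)) (at y within {0..1})"
    proof -
      have nz: "1+y \<noteq> 0" "DD x y \<noteq> 0" "cos x \<noteq> 0" using y Dy cx by auto
      show ?thesis
      unfolding \<Psi>_def using y Dy cx
      by (auto intro!: derivative_eq_intros dD) (use nz in \<open>simp add: divide_simps; simp add: algebra_simps\<close>)
    qed
    moreover have "(1/(1+y) - ((2*y - 2*c)/DD x y)/2) / (2*cos x) = hh x y"
    proof -
      have ce: "c = 2*(cos x)^2 - 1" using c1 by simp
      have e: "DD x y = 2*(cos x)^2*(1-y) + (y - (2*(cos x)^2-1))*(1+y)"
        unfolding DD_def cos_double_cos by (simp add: algebra_simps power2_eq_square)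
      show ?thesis unfolding hh_def ce by (rule alg) (use y Dy cx e in auto)
    qed
    ultimately show ?thesis by simp
  qed
  have "(hh x has_integral (\<Psi> 1 - \<Psi> 0)) {0..1}"
    by (rule fundamental_theorem_of_calculus) (use deriv in \<open>auto simp: has_real_derivative_iff_has_vector_derivative[symmetric]\<close>)
  moreover have "\<Psi> 1 - \<Psi> 0 = - ln (sin x) / (2 * cos x)"
  proof -
    have "DD x 1 = 4 * (sin x)^2" unfolding DD_def using c2 unfolding c_def by simp
    then have "ln (DD x 1) = 2 * ln 2 + 2 * ln (sin x)"
    proof -
      have "ln (4 * (sin x)^2) = ln 4 + ln ((sin x)^2)" using sx by (simp add: ln_mult)
      moreover have "ln ((sin x)^2) = 2 * ln (sin x)" by (simp add: ln_realpow)
      moreover have "ln (4::real) = 2 * ln 2" using ln_realpow[of 2 2] by simp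
      ultimately show ?thesis using \<open>DD x 1 = 4 * (sin x)^2\<close> by simp
    qed
    moreover have "DD x 0 = 1" unfolding DD_def by simp
    ultimately show ?thesis unfolding \<Psi>_def by (simp add: divide_simps)
  qed
  ultimately show ?thesis by simp
qed

definition tau :: "nat \<Rightarrow> real" where
  "tau n = integral {0..1} (\<lambda>y. y^n/(1+y))"

lemma tau_has: "((\<lambda>y. y^n/(1+y)) has_integral tau n) {0..1}"
proof -
  have "continuous_on {0..1} (\<lambda>y::real. y^n/(1+y))" by (intro continuous_intros) auto
  then have "(\<lambda>y::real. y^n/(1+y)) integrable_on {0..1}" by (rule integrable_continuous_real)
  then show ?thesis unfolding tau_def by (rule integrable_integral)
qed

lemma pow_has: "((\<lambda>y::real. y^n) has_integral (1/(real n+1))) {0..1}"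
proof -
  have "((\<lambda>y::real. y^n) has_integral ((1::real)^(Suc n)/(real n+1) - 0^(Suc n)/(real n+1))) {0..1}"
  proof (rule fundamental_theorem_of_calculus)
    show "((\<lambda>y::real. y^(Suc n)/(real n+1)) has_vector_derivative y^n) (at y within {0..1})" for y
    proof -
      have "((\<lambda>y. y^(Suc n)) has_real_derivative real (Suc n) * y^n) (at y within {0..1})"
        using DERIV_pow[of "Suc n" y] by (simp add: has_field_derivative_at_within)
      then have "((\<lambda>y. y^(Suc n)/(real n+1)) has_real_derivative (real (Suc n) * y^n)/(real n+1)) (at y within {0..1})"
        by (rule DERIV_cdivide)
      moreover have "(real (Suc n) * y^n)/(real n+1) = y^n" by (simp add: add.commute)
      ultimately show ?thesis unfolding has_real_derivative_iff_has_vector_derivative by simp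
    qed
  qed auto
  then show ?thesis by simp
qed

lemma tau_rec: "tau n + tau (Suc n) = 1/(real n+1)"
proof -
  have "((\<lambda>y. y^n/(1+y) + y^(Suc n)/(1+y)) has_integral (tau n + tau (Suc n))) {0..1}"
    by (intro has_integral_add tau_has)
  moreover have "((\<lambda>y. y^n/(1+y) + y^(Suc n)/(1+y)) has_integral (1/(real n+1))) {0..1}"
  proof (rule has_integral_spike_finite[OF _ _ pow_has, of "{}"])
    fix y :: real assume "y \<in> {0..1} - {}"
    then have "1 + y \<noteq> 0" by auto
    have "y^n/(1+y) + y^(Suc n)/(1+y) = (y^n * (1+y))/(1+y)" by (simp add: add_divide_distrib distrib_left)
    then show "y^n/(1+y) + y^(Suc n)/(1+y) = y^n" using \<open>1 + y \<noteq> 0\<close> by simp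
  qed auto
  ultimately show ?thesis using has_integral_unique by blast
qed

lemma tau_nonneg: "tau n \<ge> 0"
  using has_integral_nonneg[OF tau_has] by auto

lemma tau_le: "tau n \<le> 1/(real n+1)"
proof (rule has_integral_le[OF tau_has pow_has])
  fix y :: real assume "y \<in> {0..1}"
  then show "y^n/(1+y) \<le> y^n" by (auto simp: divide_simps mult_le_cancel_left1)
qed

lemma hh_nonneg: assumes "0 < x" "x < pi/2" "0 \<le> y" "y < 1" shows "hh x y \<ge> 0"
proof -
  have "cos x > 0" using assms by (intro cos_gt_zero) auto
  then show ?thesis unfolding hh_def using DD_pos[of y x] assms by auto
qed

lemma open01: "((f::real\<Rightarrow>real) has_integral I) {0<..<1} \<longleftrightarrow> (f has_integral I) {0..1}"
  using has_integral_open_interval[of f I 0 1] by simp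

lemma open0pi: "((f::real\<Rightarrow>real) has_integral I) {0<..<pi/2} \<longleftrightarrow> (f has_integral I) {0..pi/2}"
  using has_integral_open_interval[of f I 0 "pi/2"] by simp

definition GG :: "nat \<Rightarrow> real \<Rightarrow> real" where
  "GG m x = indicator {0<..<pi/2} x * (x^(2*m) * (- ln (sin x) / (2 * cos x)))"

definition WW :: "nat \<Rightarrow> real \<Rightarrow> real" where
  "WW m y = indicator {0<..<1} y * ((\<Sum>n. y^n * MM m n) / (1+y))"

lemma inner_y:
  "(\<integral>\<^sup>+y. ennreal (indicator ({0<..<pi/2} \<times> {0<..<1}) (x,y) * (x^(2*m) * hh x y)) \<partial>lborel) = ennreal (GG m x)"
proof (cases "x \<in> {0<..<pi/2}")
  case True
  have "((\<lambda>y. x^(2*m) * hh x y) has_integral (x^(2*m) * (- ln (sin x) / (2 * cos x)))) {0<..<1}"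
    unfolding open01 using True by (intro has_integral_mult_right y_integral) auto
  from nn_integral_has_integral_lebesgue[OF _ this]
  have "(\<integral>\<^sup>+y. ennreal (indicator {0<..<1} y * (x^(2*m) * hh x y)) \<partial>lborel) = ennreal (x^(2*m) * (- ln (sin x) / (2 * cos x)))"
    using True hh_nonneg by auto
  moreover have e: "indicator ({0<..<pi/2} \<times> {0<..<1}) (x,y) = (indicator {0<..<1} y :: real)" for y
    using True by (auto simp: indicator_def)
  ultimately show ?thesis unfolding GG_def e using True by simp
next
  case False
  then have "(\<lambda>y. ennreal (indicator ({0<..<pi/2} \<times> {0<..<1}) (x,y) * (x^(2*m) * hh x y))) = (\<lambda>y. 0)"
    by (auto simp: fun_eq_iff indicator_def)
  moreover have "GG m x = 0" using False unfolding GG_def by simp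
  ultimately show ?thesis by simp
qed

lemma inner_x':
  "(\<integral>\<^sup>+x. ennreal (indicator ({0<..<pi/2} \<times> {0<..<1}) (x,y) * (x^(2*m) * hh x y)) \<partial>lborel) = ennreal (WW m y)"
proof (cases "y \<in> {0<..<1}")
  case True
  have "((\<lambda>x. x^(2*m) * ((1-y)*cos x / DD x y)) has_integral (\<Sum>n. y^n * MM m n)) {0..pi/2}"
    using True by (intro inner_x) auto
  from has_integral_mult_right[OF this, of "1/(1+y)"]
  have "((\<lambda>x. x^(2*m) * hh x y) has_integral ((\<Sum>n. y^n * MM m n) / (1+y))) {0<..<pi/2}"
    unfolding open0pi hh_def by (simp add: field_simps)
  from nn_integral_has_integral_lebesgue[OF _ this]
  have "(\<integral>\<^sup>+x. ennreal (indicator {0<..<pi/2} x * (x^(2*m) * hh x y)) \<partial>lborel) = ennreal ((\<Sum>n. y^n * MM m n) / (1+y))"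
    using True hh_nonneg by auto
  moreover have e: "indicator ({0<..<pi/2} \<times> {0<..<1}) (x,y) = (indicator {0<..<pi/2} x :: real)" for x
    using True by (auto simp: indicator_def)
  ultimately show ?thesis unfolding WW_def e using True by simp
next
  case False
  then have "(\<lambda>x. ennreal (indicator ({0<..<pi/2} \<times> {0<..<1}) (x,y) * (x^(2*m) * hh x y))) = (\<lambda>x. 0)"
    by (auto simp: fun_eq_iff indicator_def)
  moreover have "WW m y = 0" using False unfolding WW_def by simp
  ultimately show ?thesis by simp
qed

lemma fubini_GW: "(\<integral>\<^sup>+x. ennreal (GG m x) \<partial>lborel) = (\<integral>\<^sup>+y. ennreal (WW m y) \<partial>lborel)"
proof -
  have "(\<integral>\<^sup>+x. ennreal (GG m x) \<partial>lborel) =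
     (\<integral>\<^sup>+x. (\<integral>\<^sup>+y. ennreal (indicator ({0<..<pi/2} \<times> {0<..<1}) (x,y) * (x^(2*m) * hh x y)) \<partial>lborel) \<partial>lborel)"
    unfolding inner_y ..
  also have "\<dots> = (\<integral>\<^sup>+y. (\<integral>\<^sup>+x. ennreal (indicator ({0<..<pi/2} \<times> {0<..<1}) (x,y) * (x^(2*m) * hh x y)) \<partial>lborel) \<partial>lborel)"
    by (rule lborel_pair.Fubini'[symmetric]) (unfold hh_def DD_def, measurable)
  also have "\<dots> = (\<integral>\<^sup>+y. ennreal (WW m y) \<partial>lborel)"
    unfolding inner_x' ..
  finally show ?thesis .
qed

lemma tau_leb: "integrable lborel (\<lambda>y::real. indicator {0<..<1} y * (y^n/(1+y)))"
  "integral\<^sup>L lborel (\<lambda>y::real. indicator {0<..<1} y * (y^n/(1+y))) = tau n"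
proof -
  define g where "g y = indicator {0<..<1} y * (y^n/(1+y))" for y :: real
  have "((\<lambda>y. y^n/(1+y)) has_integral tau n) {0<..<1}" unfolding open01 by (rule tau_has)
  from nn_integral_has_integral_lebesgue[OF _ this]
  have 1: "(\<integral>\<^sup>+y. ennreal (g y) \<partial>lborel) = ennreal (tau n)" unfolding g_def by simp
  have 2: "g \<in> borel_measurable lborel" unfolding g_def by measurable
  have 3: "AE y in lborel. 0 \<le> g y" unfolding g_def by (intro AE_I2) (simp add: indicator_def)
  have "integrable lborel g \<and> integral\<^sup>L lborel g = tau n"
    using nn_integral_eq_integrable[OF 2 3 tau_nonneg[of n]] 1 by simp
  then show "integrable lborel (\<lambda>y::real. indicator {0<..<1} y * (y^n/(1+y)))"
    "integral\<^sup>L lborel (\<lambda>y::real. indicator {0<..<1} y * (y^n/(1+y))) = tau n"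
    unfolding g_def by auto
qed

lemma KK_nonneg: "KK m \<ge> 0" unfolding KK_def by (intro sum_nonneg) auto

lemma summable_MM_tau: "summable (\<lambda>n. \<bar>MM m n\<bar> * tau n)"
proof (rule summable_comparison_test_ev)
  show "summable (\<lambda>n. KK m * inverse (real n ^ 2))"
    by (intro summable_mult inverse_power_summable) auto
  show "\<forall>\<^sub>F n in sequentially. norm (\<bar>MM m n\<bar> * tau n) \<le> KK m * inverse (real n ^ 2)"
  proof (rule eventually_sequentiallyI[of 1])
    fix n :: nat assume n: "n \<ge> 1"
    have "norm (\<bar>MM m n\<bar> * tau n) = \<bar>MM m n\<bar> * tau n" using tau_nonneg by simp
    also have "\<dots> \<le> (KK m / (2*real n+1)) * (1/(real n+1))"
      by (intro mult_mono MM_bound tau_le) (auto simp: tau_nonneg KK_nonneg)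
    also have "\<dots> \<le> KK m * inverse (real n ^ 2)"
    proof -
      have "real n ^ 2 \<le> (2*real n+1) * (real n+1)" by (simp add: power2_eq_square algebra_simps)
      then have "1/((2*real n+1) * (real n+1)) \<le> 1/(real n ^ 2)"
        using n by (intro divide_left_mono) auto
      then have "KK m * (1/((2*real n+1) * (real n+1))) \<le> KK m * (1/(real n ^ 2))"
        by (rule mult_left_mono) (rule KK_nonneg)
      moreover have "(KK m / (2*real n+1)) * (1/(real n+1)) = KK m * (1/((2*real n+1) * (real n+1)))" by simp
      moreover have "KK m * inverse (real n ^ 2) = KK m * (1/(real n ^ 2))" by (simp add: divide_inverse)
      ultimately show ?thesis by simp
    qed
    finally show "norm (\<bar>MM m n\<bar> * tau n) \<le> KK m * inverse (real n ^ 2)" .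
  qed
qed

lemma SS_nonneg: assumes "0 \<le> y" "y < 1" shows "(\<Sum>n. y^n * MM m n) \<ge> 0"
proof (rule has_integral_nonneg[OF inner_x(1)[OF assms]])
  fix x :: real assume x: "x \<in> {0..pi/2}"
  have "cos x \<ge> 0" using x by (intro cos_ge_zero) auto
  then show "0 \<le> x^(2*m) * ((1-y)*cos x / DD x y)" using x assms DD_pos[OF assms, of x] by auto
qed

lemma WW_integral: "(\<integral>\<^sup>+y. ennreal (WW m y) \<partial>lborel) = ennreal (\<Sum>n. MM m n * tau n)"
  and WW_sum_nonneg: "(\<Sum>n. MM m n * tau n) \<ge> 0"
proof -
  define f where "f n y = MM m n * (indicator {0<..<1} y * (y^n/(1+y)))" for n y
  have fi: "integrable lborel (f n)" for n unfolding f_def by (intro integrable_mult_right tau_leb)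
  have fint: "integral\<^sup>L lborel (f n) = MM m n * tau n" for n unfolding f_def
    by (simp only: integral_mult_right_zero tau_leb(2))
  have fnorm: "integral\<^sup>L lborel (\<lambda>y. norm (f n y)) = \<bar>MM m n\<bar> * tau n" for n
  proof -
    have e: "(\<lambda>y. norm (f n y)) = (\<lambda>y. \<bar>MM m n\<bar> * (indicator {0<..<1} y * (y^n/(1+y))))"
      unfolding f_def by (auto simp: fun_eq_iff abs_mult indicator_def)
    show ?thesis by (simp only: e integral_mult_right_zero tau_leb(2))
  qed
  have sumy: "(\<lambda>n. f n y) sums WW m y" for y
  proof (cases "y \<in> {0<..<1}")
    case True
    have "(\<lambda>n. y^n * MM m n) sums (\<Sum>n. y^n * MM m n)" using True by (intro inner_x(2)) auto
    from sums_divide[OF this, of "1+y"]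
    have "(\<lambda>n. y^n * MM m n / (1+y)) sums ((\<Sum>n. y^n * MM m n) / (1+y))" .
    moreover have "f n y = y^n * MM m n / (1+y)" for n unfolding f_def using True by simp
    moreover have "WW m y = (\<Sum>n. y^n * MM m n) / (1+y)" unfolding WW_def using True by simp
    ultimately show ?thesis by simp
  next
    case False
    then show ?thesis unfolding f_def WW_def by simp
  qed
  have sumn: "summable (\<lambda>n. norm (f n y))" for y
  proof (cases "y \<in> {0<..<1}")
    case True
    show ?thesis
    proof (rule summable_comparison_test[OF _ summable_mult[OF summable_geometric[of y], of "KK m"]])
      show "\<exists>N. \<forall>n\<ge>N. norm (norm (f n y)) \<le> KK m * y^n"
      proof (intro exI allI impI)
        fix n :: nat
        have "KK m / (2*real n+1) \<le> KK m / 1" by (rule divide_left_mono) (auto simp: KK_nonneg)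
        then have "\<bar>MM m n\<bar> \<le> KK m" using MM_bound[of m n] by simp
        moreover have "y^n/(1+y) \<le> y^n" using True by (auto simp: divide_simps mult_le_cancel_left1)
        moreover have "0 \<le> y^n/(1+y)" using True by auto
        ultimately have "\<bar>MM m n\<bar> * (y^n/(1+y)) \<le> KK m * y^n"
          by (intro mult_mono) (auto simp: KK_nonneg)
        then show "norm (norm (f n y)) \<le> KK m * y^n"
          unfolding f_def using True by (simp add: abs_mult)
      qed
    qed (use True in auto)
  next
    case False
    then show ?thesis unfolding f_def by simp
  qed
  have "summable (\<lambda>n. integral\<^sup>L lborel (\<lambda>y. norm (f n y)))"
    unfolding fnorm by (rule summable_MM_tau)
  note L = integrable_suminf[OF fi AE_I2[OF sumn] this] integral_suminf[OF fi AE_I2[OF sumn] this]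
  have Weq: "(\<lambda>y. \<Sum>n. f n y) = WW m"
  proof
    fix y show "(\<Sum>n. f n y) = WW m y" using sums_unique[OF sumy[of y]] by simp
  qed
  have Wint: "integrable lborel (WW m)" using L(1) unfolding Weq .
  have Wval: "integral\<^sup>L lborel (WW m) = (\<Sum>n. MM m n * tau n)" using L(2) unfolding Weq fint .
  have Wnn: "AE y in lborel. 0 \<le> WW m y"
  proof (rule AE_I2)
    fix y :: real
    show "0 \<le> WW m y"
    proof (cases "y \<in> {0<..<1}")
      case True
      then have "0 \<le> (\<Sum>n. y^n * MM m n)" by (intro SS_nonneg) auto
      then show ?thesis unfolding WW_def using True by simp
    qed (simp add: WW_def)
  qed
  show "(\<integral>\<^sup>+y. ennreal (WW m y) \<partial>lborel) = ennreal (\<Sum>n. MM m n * tau n)"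
    using nn_integral_eq_integral[OF Wint Wnn] Wval by simp
  show "(\<Sum>n. MM m n * tau n) \<ge> 0" using integral_nonneg_AE[OF Wnn] Wval by simp
qed

lemma main_integral:
  "((\<lambda>x::real. x ^ (2*m) * ln (sin x) / cos x) has_integral (-2 * (\<Sum>n. MM m n * tau n))) {0..pi/2}"
proof -
  have Gm: "GG m \<in> borel_measurable lborel" unfolding GG_def by measurable
  have Gnn: "AE x in lborel. 0 \<le> GG m x"
  proof (rule AE_I2)
    fix x :: real
    show "0 \<le> GG m x"
    proof (cases "x \<in> {0<..<pi/2}")
      case True
      have c: "cos x > 0" using True by (intro cos_gt_zero) auto
      have s: "sin x > 0" "sin x \<le> 1" using True by (auto intro: sin_gt_zero)
      have "ln (sin x) \<le> 0" using s by simp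
      then have "x^(2*m) * ln (sin x) \<le> 0" using True by (intro mult_nonneg_nonpos) auto
      then have "x^(2*m) * ln (sin x) / (2 * cos x) \<le> 0" using c by (intro divide_nonpos_pos) auto
      then show ?thesis unfolding GG_def using True by auto
    qed (simp add: GG_def)
  qed
  have S0: "0 \<le> (\<Sum>n. MM m n * tau n)" by (rule WW_sum_nonneg)
  have "(\<integral>\<^sup>+x. ennreal (GG m x) \<partial>lborel) = ennreal (\<Sum>n. MM m n * tau n)"
    using fubini_GW WW_integral by simp
  then have Gi: "integrable lborel (GG m)" "integral\<^sup>L lborel (GG m) = (\<Sum>n. MM m n * tau n)"
    using nn_integral_eq_integrable[OF Gm Gnn S0] by auto
  have "(GG m has_integral (\<Sum>n. MM m n * tau n)) UNIV"
    using has_integral_integral_real[OF Gi(1)] Gi(2) by simp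
  from has_integral_mult_right[OF this, of "-2"]
  have "((\<lambda>x. -2 * GG m x) has_integral (-2 * (\<Sum>n. MM m n * tau n))) UNIV" .
  moreover have "(\<lambda>x. -2 * GG m x) = (\<lambda>x. if x \<in> {0..pi/2} then x ^ (2*m) * ln (sin x) / cos x else 0)"
  proof
    fix x :: real
    show "-2 * GG m x = (if x \<in> {0..pi/2} then x ^ (2*m) * ln (sin x) / cos x else 0)"
    proof (cases "x \<in> {0<..<pi/2}")
      case True
      have c: "cos x > 0" using True by (intro cos_gt_zero) auto
      then show ?thesis unfolding GG_def using True by auto
    next
      case False
      then consider "x = 0" | "x = pi/2" | "x \<notin> {0..pi/2}" by fastforce
      then show ?thesis
      proof cases
        case 1 then show ?thesis unfolding GG_def by simp
      next
        case 2
        show ?thesis unfolding GG_def 2 by simp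
      next
        case 3
        then have "indicator {0<..<pi/2} x = (0::real)" by (auto simp: indicator_def)
        moreover have "x \<notin> {0..pi/2}" using 3 .
        ultimately show ?thesis unfolding GG_def by (simp only: if_False mult_zero_left mult_zero_right)
      qed
    qed
  qed
  ultimately have "((\<lambda>x. if x \<in> {0..pi/2} then x ^ (2*m) * ln (sin x) / cos x else 0) has_integral (-2 * (\<Sum>n. MM m n * tau n))) UNIV"
    by simp
  then show ?thesis by (simp only: has_integral_restrict_UNIV)
qed

lemma lin_aux: fixes a b u v X :: real assumes "- a - b = (- u - v) * X" shows "a + b = (u + v) * X"
  using assms by (simp add: algebra_simps)
lemma t3: fixes u v :: real
  assumes t: "\<And>k. k \<le> 2*j \<Longrightarrow> (-1)^k / (A^(k+1) * B^(2*j-k+1)) = u * v * ((-u)^k * v^(2*j-k))"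
  shows "(\<Sum>k=0..2*j. (-1)^k / (A^(k+1) * B^(2*j-k+1))) = u * v * (\<Sum>k<Suc (2*j). (-u)^k * v^(2*j-k))"
  unfolding sum_distrib_left atLeast0AtMost lessThan_Suc_atMost
proof (rule sum.cong)
  fix k assume "k \<in> {..2*j}"
  then show "(-1)^k / (A^(k+1) * B^(2*j-k+1)) = u * v * ((-u)^k * v^(2*j-k))" by (intro t) simp
qed simp
lemma t4: fixes u v :: real assumes u: "u > 0" and v: "v > 0"
  shows "(\<Sum>k<Suc (2*j). (-u)^k * v^(2*j-k)) = (u^(2*j+1) + v^(2*j+1)) / (u + v)"
proof -
  have e1: "(-u)^(Suc (2*j)) - v^(Suc (2*j)) = (-u - v) * (\<Sum>k<Suc (2*j). (-u)^k * v^(2*j-k))"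
    by (rule diff_power_eq_sum)
  have e2: "(-u)^(Suc (2*j)) = - (u^(Suc (2*j)))" by (rule power_minus_odd) simp
  have "u^(Suc (2*j)) + v^(Suc (2*j)) = (u + v) * (\<Sum>k<Suc (2*j). (-u)^k * v^(2*j-k))"
    by (rule lin_aux) (use e1 e2 in simp)
  then show ?thesis using u v by (simp add: eq_divide_eq mult.commute)
qed
lemma geo2:
  fixes A B :: real and j :: nat
  assumes A: "A > 0" and B: "B > 0"
  shows "(\<Sum>k=0..2*j. (-1)^k / (A^(k+1) * B^(2*j-k+1))) = (1/A^(2*j+1) + 1/B^(2*j+1)) / (A+B)"
proof -
  define u where "u = 1/A"
  define v where "v = 1/B"
  have u: "u > 0" and v: "v > 0" using A B by (auto simp: u_def v_def)
  have t: "(-1)^k / (A^(k+1) * B^(2*j-k+1)) = u * v * ((-u)^k * v^(2*j-k))" if "k \<le> 2*j" for k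
  proof -
    have "(-1)^k / (A^(k+1) * B^(2*j-k+1)) = (-1)^k * (1/A)^(k+1) * (1/B)^(2*j-k+1)"
      by (simp add: power_one_over)
    also have "\<dots> = u * v * ((-u)^k * v^(2*j-k))"
    proof -
      have a1: "u^(k+1) = u * u^k" by (simp only: Suc_eq_plus1[symmetric] power_Suc)
      have a2: "v^(2*j-k+1) = v * v^(2*j-k)" by (simp only: Suc_eq_plus1[symmetric] power_Suc)
      have a3: "(-u)^k = (-1)^k * u^k" by (rule power_minus)
      note a = a1 a2 a3
      show ?thesis unfolding u_def[symmetric] v_def[symmetric] a by (simp only: mult_ac)
    qed
    finally show ?thesis .
  qed
  have "(\<Sum>k=0..2*j. (-1)^k / (A^(k+1) * B^(2*j-k+1))) = u * v * (\<Sum>k<Suc (2*j). (-u)^k * v^(2*j-k))"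
    by (rule t3) (rule t)
  also have "\<dots> = (u * v / (u + v)) * (u^(2*j+1) + v^(2*j+1))"
    unfolding t4[OF u v] by simp
  also have "\<dots> = 1 / (A + B) * (1/A^(2*j+1) + 1/B^(2*j+1))"
  proof -
    have e1: "u * v / (u + v) = 1 / (A + B)"
      using A B unfolding u_def v_def by (simp add: field_simps)
    have e2: "u^(2*j+1) = 1/A^(2*j+1)" unfolding u_def by (simp add: power_one_over)
    have e3: "v^(2*j+1) = 1/B^(2*j+1)" unfolding v_def by (simp add: power_one_over)
    show ?thesis unfolding e1 e2 e3 ..
  qed
  finally show ?thesis by simp
qed

lemma alt_partial: "(\<Sum>p<N. (-1)^p / (real n + real p + 1)) = tau n - (-1)^N * tau (n+N)"
proof (induction N)
  case 0 then show ?case by simp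
next
  case (Suc N)
  have r: "tau (n+N) + tau (Suc (n+N)) = 1/(real (n+N)+1)" by (rule tau_rec)
  have "(\<Sum>p<Suc N. (-1)^p / (real n + real p + 1)) = tau n - (-1)^N * tau (n+N) + (-1)^N / (real n + real N + 1)"
    using Suc by simp
  also have "(-1)^N / (real n + real N + 1) = (-1)^N * (tau (n+N) + tau (Suc (n+N)))"
  proof -
    have "real n + real N + 1 = real (n+N) + 1" by simp
    then have "(-1)^N / (real n + real N + 1) = (-1)^N * (1/(real (n+N)+1))" by simp
    then show ?thesis using r by simp
  qed
  finally show ?case by (simp add: algebra_simps)
qed

lemma summable_beta: "summable (\<lambda>n. (-1::real)^n / (2*real n+1)^(Suc k))"
  and sums_beta: "(\<lambda>n. (-1::real)^n / (2*real n+1)^(Suc k)) sums dirichlet_beta (Suc k)"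
proof -
  have "summable (\<lambda>n. (-1::real)^n * (1 / (2*real n+1)^(Suc k)))"
  proof (rule summable_Leibniz'(1))
    show "(\<lambda>n. 1 / (2*real n+1)^(Suc k)) \<longlonglongrightarrow> 0"
    proof (rule Lim_null_comparison)
      show "(\<lambda>n. inverse (real (Suc n))) \<longlonglongrightarrow> 0" by (rule LIMSEQ_inverse_real_of_nat)
      show "\<forall>\<^sub>F n in sequentially. norm (1 / (2*real n+1)^(Suc k)) \<le> inverse (real (Suc n))"
      proof (intro always_eventually allI)
        fix n :: nat
        have h: "2*real n+1 \<le> (2*real n+1)^(Suc k)" by (rule self_le_power) auto
        have "real (Suc n) \<le> 2*real n+1" by simp
        then have "real (Suc n) \<le> (2*real n+1)^(Suc k)" using h by (rule order_trans)
        then show "norm (1 / (2*real n+1)^(Suc k)) \<le> inverse (real (Suc n))"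
          by (simp add: inverse_eq_divide divide_left_mono del: of_nat_Suc)
      qed
    qed
    show "0 \<le> 1 / (2*real n+1)^(Suc k)" for n by simp
    show "1 / (2*real (Suc n)+1)^(Suc k) \<le> 1 / (2*real n+1)^(Suc k)" for n
    proof -
      have "(2*real n+1)^(Suc k) \<le> (2*real (Suc n)+1)^(Suc k)" by (rule power_mono) auto
      moreover have "0 < (2*real (Suc n)+1)^(Suc k) * (2*real n+1)^(Suc k)" by (intro mult_pos_pos) auto
      ultimately show ?thesis by (intro divide_left_mono) auto
    qed
  qed
  then show s: "summable (\<lambda>n. (-1::real)^n / (2*real n+1)^(Suc k))" by simp
  show "(\<lambda>n. (-1::real)^n / (2*real n+1)^(Suc k)) sums dirichlet_beta (Suc k)"
    unfolding dirichlet_beta_def using s by (rule summable_sums)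
qed

lemma E_tendsto: "(\<lambda>N. \<Sum>n<N. (-1)^n / (2*real n+1)^r * tau (n+N)) \<longlonglongrightarrow> 0"
  if "r \<ge> 1"
proof -
  define a where "a k N = (if k < N then (-1)^k / (2*real k+1)^r * tau (k+N) else 0)" for k N
  define M where "M k = 1 / ((2*real k+1) * (real k+1))" for k
  have taub: "0 \<le> tau n" "tau n \<le> 1/(real n+1)" for n using tau_nonneg tau_le by auto
  have lim: "(\<lambda>N. a k N) \<longlonglongrightarrow> 0" for k
  proof (rule Lim_null_comparison)
    show "(\<lambda>N. 1 / (real N + 1)) \<longlonglongrightarrow> 0"
      using LIMSEQ_inverse_real_of_nat by (simp add: inverse_eq_divide add.commute)
    show "\<forall>\<^sub>F N in sequentially. norm (a k N) \<le> 1 / (real N + 1)"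
    proof (intro always_eventually allI)
      fix N
      have p: "(2*real k+1)^r \<ge> 1" by (rule one_le_power) simp
      have "norm ((-1)^k / (2*real k+1)^r * tau (k+N)) = tau (k+N) / (2*real k+1)^r"
        using taub by (simp add: abs_mult power_abs)
      also have "\<dots> \<le> tau (k+N) / 1" by (rule divide_left_mono) (use p taub in auto)
      also have "\<dots> \<le> 1/(real (k+N)+1)" using taub(2)[of "k+N"] by simp
      also have "\<dots> \<le> 1/(real N + 1)" by (rule divide_left_mono) auto
      finally show "norm (a k N) \<le> 1 / (real N + 1)" unfolding a_def by auto
    qed
  qed
  have bound: "norm (a k N) \<le> M k" for k N
  proof (cases "k < N")
    case True
    have p: "(2*real k+1)^r \<ge> 2*real k+1" by (rule self_le_power) (use that in auto)
    have "norm ((-1)^k / (2*real k+1)^r * tau (k+N)) = tau (k+N) / (2*real k+1)^r"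
      using taub by (simp add: abs_mult power_abs)
    also have "\<dots> \<le> tau (k+N) / (2*real k+1)" using p taub by (intro divide_left_mono) auto
    also have "\<dots> \<le> (1/(real k+1)) / (2*real k+1)"
    proof (rule divide_right_mono)
      have "tau (k+N) \<le> 1/(real (k+N)+1)" using taub by blast
      also have "\<dots> \<le> 1/(real k+1)" by (rule divide_left_mono) auto
      finally show "tau (k+N) \<le> 1/(real k+1)" .
    qed auto
    also have "\<dots> = M k" unfolding M_def by simp
    finally show ?thesis unfolding a_def using True by simp
  next
    case False then show ?thesis unfolding a_def M_def by simp
  qed
  have sM: "summable M"
  proof (rule summable_comparison_test_ev)
    show "summable (\<lambda>n. inverse (real n ^ 2))" by (rule inverse_power_summable) auto
    show "\<forall>\<^sub>F n in sequentially. norm (M n) \<le> inverse (real n ^ 2)"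
    proof (rule eventually_sequentiallyI[of 1])
      fix n :: nat assume n: "n \<ge> 1"
      have "real n ^ 2 \<le> (2*real n+1) * (real n+1)" by (simp add: power2_eq_square algebra_simps)
      then have "1/((2*real n+1) * (real n+1)) \<le> 1/(real n ^ 2)"
        using n by (intro divide_left_mono) auto
      then show "norm (M n) \<le> inverse (real n ^ 2)" unfolding M_def by (simp add: inverse_eq_divide)
    qed
  qed
  have T: "(\<lambda>N. \<Sum>k. a k N) \<longlonglongrightarrow> (\<Sum>k. (0::real))"
    using tannerys_theorem[of a "\<lambda>_. 0" sequentially M, OF lim _ sM] bound
    by (auto intro: always_eventually)
  have "(\<Sum>k. a k N) = (\<Sum>n<N. (-1)^n / (2*real n+1)^r * tau (n+N))" for N
    by (subst suminf_finite[of "{..<N}"]) (auto simp: a_def)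
  then show ?thesis using T by simp
qed

definition AA :: "nat \<Rightarrow> real" where "AA n = 2 * real n + 1"

lemma AA_pos: "AA n > 0" unfolding AA_def by simp

lemma Q_eq:
  "(\<Sum>k=0..2*j. (-1)^k * (\<Sum>n<N. (-1)^n / AA n^(k+1)) * (\<Sum>p<N. (-1)^p / AA p^(2*j-k+1)))
   = (\<Sum>n<N. (-1)^n * tau n / AA n^(2*j+1)) - (-1)^N * (\<Sum>n<N. (-1)^n / AA n^(2*j+1) * tau (n+N))"
proof -
  define r where "r = 2*j+1"
  define T where "T n p = (-1::real)^n * (-1)^p * (1 / AA n^r) / (AA n + AA p)" for n p
  have "(\<Sum>k=0..2*j. (-1)^k * (\<Sum>n<N. (-1)^n / AA n^(k+1)) * (\<Sum>p<N. (-1)^p / AA p^(2*j-k+1)))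
     = (\<Sum>k=0..2*j. \<Sum>n<N. \<Sum>p<N. (-1)^k * (((-1)^n / AA n^(k+1)) * ((-1)^p / AA p^(2*j-k+1))))"
  proof (rule sum.cong[OF refl])
    fix k
    show "(-1)^k * (\<Sum>n<N. (-1)^n / AA n^(k+1)) * (\<Sum>p<N. (-1)^p / AA p^(2*j-k+1))
      = (\<Sum>n<N. \<Sum>p<N. (-1)^k * (((-1)^n / AA n^(k+1)) * ((-1)^p / AA p^(2*j-k+1))))"
      by (simp only: mult.assoc[of "(-1)^k"] sum_product) (simp only: sum_distrib_left)
  qed
  also have "\<dots> = (\<Sum>n<N. \<Sum>p<N. \<Sum>k=0..2*j. (-1)^k * (((-1)^n / AA n^(k+1)) * ((-1)^p / AA p^(2*j-k+1))))"
    by (subst sum.swap) (simp only: sum.swap[of _ "{0..2*j}"])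
  also have "\<dots> = (\<Sum>n<N. \<Sum>p<N. (-1)^n * (-1)^p * (\<Sum>k=0..2*j. (-1)^k / (AA n^(k+1) * AA p^(2*j-k+1))))"
    by (intro sum.cong refl) (simp add: sum_distrib_left mult_ac)
  also have "\<dots> = (\<Sum>n<N. \<Sum>p<N. (-1)^n * (-1)^p * ((1/AA n^r + 1/AA p^r) / (AA n + AA p)))"
    unfolding r_def by (intro sum.cong refl) (simp only: geo2[OF AA_pos AA_pos])
  also have "\<dots> = (\<Sum>n<N. \<Sum>p<N. T n p) + (\<Sum>n<N. \<Sum>p<N. T p n)"
    unfolding T_def sum.distrib[symmetric]
    by (intro sum.cong refl) (simp add: add_divide_distrib distrib_left add.commute mult_ac)
  also have "(\<Sum>n<N. \<Sum>p<N. T p n) = (\<Sum>n<N. \<Sum>p<N. T n p)"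
    by (rule sum.swap)
  also have "(\<Sum>n<N. \<Sum>p<N. T n p) + (\<Sum>n<N. \<Sum>p<N. T n p)
      = (\<Sum>n<N. (-1)^n / AA n^r * (\<Sum>p<N. (-1)^p / (real n + real p + 1)))"
  proof -
    have "T n p + T n p = (-1)^n / AA n^r * ((-1)^p / (real n + real p + 1))" for n p
    proof -
      have e: "AA n + AA p = 2 * (real n + real p + 1)" unfolding AA_def by simp
      have h: "x/(2*d) + x/(2*d) = x/d" for x d :: real by (cases "d=0") (simp_all add: field_simps)
      have h2: "(-1)^n * (-1)^p * (1/a) / d = (-1)^n / a * ((-1)^p / d)" for a d :: real by simp
      show ?thesis unfolding T_def e by (simp only: h) (simp only: h2)
    qed
    then show ?thesis
      by (simp only: sum.distrib[symmetric] sum_distrib_left)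
  qed
  also have "\<dots> = (\<Sum>n<N. (-1)^n / AA n^r * (tau n - (-1)^N * tau (n+N)))"
    unfolding alt_partial ..
  also have "\<dots> = (\<Sum>n<N. (-1)^n * tau n / AA n^r) - (-1)^N * (\<Sum>n<N. (-1)^n / AA n^r * tau (n+N))"
    by (simp add: sum_distrib_left sum_subtractf algebra_simps)
  finally show ?thesis unfolding r_def .
qed

lemma beta_identity:
  "(\<lambda>n. (-1)^n * tau n / (2*real n+1)^(2*j+1)) sums
     (\<Sum>k=0..2*j. (-1)^k * dirichlet_beta (k+1) * dirichlet_beta (2*j-k+1))"
proof -
  define Q where "Q N = (\<Sum>k=0..2*j. (-1)^k * (\<Sum>n<N. (-1)^n / AA n^(k+1)) * (\<Sum>p<N. (-1)^p / AA p^(2*j-k+1)))" for N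
  define E where "E N = (\<Sum>n<N. (-1)^n / AA n^(2*j+1) * tau (n+N))" for N
  have bl: "(\<lambda>N. \<Sum>n<N. (-1)^n / AA n^(k+1)) \<longlonglongrightarrow> dirichlet_beta (k+1)" for k
    using sums_beta[of k] unfolding sums_def AA_def Suc_eq_plus1 .
  have Ql: "Q \<longlonglongrightarrow> (\<Sum>k=0..2*j. (-1)^k * dirichlet_beta (k+1) * dirichlet_beta (2*j-k+1))"
    unfolding Q_def by (intro tendsto_sum tendsto_mult tendsto_const bl)
  have El: "E \<longlonglongrightarrow> 0" unfolding E_def AA_def by (rule E_tendsto) simp
  have El2: "(\<lambda>N. (-1)^N * E N) \<longlonglongrightarrow> 0"
  proof (rule Lim_null_comparison)
    show "(\<lambda>N. norm (E N)) \<longlonglongrightarrow> 0" using El by (rule tendsto_norm_zero)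
  qed (intro always_eventually allI, simp add: abs_mult)
  have "(\<lambda>N. Q N + (-1)^N * E N) \<longlonglongrightarrow> (\<Sum>k=0..2*j. (-1)^k * dirichlet_beta (k+1) * dirichlet_beta (2*j-k+1)) + 0"
    by (intro tendsto_add Ql El2)
  moreover have "Q N + (-1)^N * E N = (\<Sum>n<N. (-1)^n * tau n / (2*real n+1)^(2*j+1))" for N
    unfolding Q_def E_def Q_eq by (simp add: AA_def)
  ultimately show ?thesis unfolding sums_def by simp
qed

definition SB :: "nat \<Rightarrow> real" where
  "SB j = (\<Sum>k=0..2*j. (-1) ^ k * dirichlet_beta (k+1) * dirichlet_beta (2*j - k + 1))"

definition CC :: "nat \<Rightarrow> nat \<Rightarrow> real" where
  "CC m j = (-1)^j * fact (2*m) / fact (2*m-2*j) * (pi/2)^(2*m-2*j)"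

lemma powi_m1: "((-1::real) powi (int j - 1)) = - ((-1)^j)"
proof -
  have "((-1::real) powi (int j - 1)) = (-1) powi (int j) / (-1) powi 1"
    by (rule power_int_diff) simp
  then show ?thesis by simp
qed

lemma series_swap: "(\<Sum>n. MM m n * tau n) = (\<Sum>j=0..m. CC m j * SB j)"
proof -
  define g where "g j n = (-1)^n * tau n / (2*real n+1)^(2*j+1)" for j n
  have gs: "g j sums SB j" for j unfolding g_def SB_def by (rule beta_identity)
  have "MM m n * tau n = (\<Sum>j=0..m. CC m j * g j n)" for n
    unfolding MM_def CC_def g_def sum_distrib_right
    by (intro sum.cong refl) (simp add: field_simps)
  then have "(\<Sum>n. MM m n * tau n) = (\<Sum>n. \<Sum>j=0..m. CC m j * g j n)" by simp
  also have "\<dots> = (\<Sum>j=0..m. \<Sum>n. CC m j * g j n)"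
    by (rule suminf_sum) (use gs in \<open>auto intro: summable_mult sums_summable\<close>)
  also have "\<dots> = (\<Sum>j=0..m. CC m j * SB j)"
    by (intro sum.cong refl) (use gs in \<open>simp add: sums_unique[symmetric] sums_mult\<close>)
  finally show ?thesis .
qed

theorem lemma2:
  fixes m :: nat
  shows "((\<lambda>x::real. x ^ (2*m) * ln (sin x) / cos x) has_integral
     (2 * fact (2*m) * (\<Sum>j=0..m. ((-1::real) powi (int j - 1)) / fact (2*m - 2*j)
        * (pi/2) ^ (2*m - 2*j)
        * (\<Sum>k=0..2*j. (-1) ^ k * dirichlet_beta (k+1) * dirichlet_beta (2*j - k + 1)))))
     {0..pi/2}"
proof -
  have eq: "-2 * (\<Sum>n. MM m n * tau n) = 2 * fact (2*m) * (\<Sum>j=0..m. ((-1::real) powi (int j - 1)) / fact (2*m - 2*j)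
        * (pi/2) ^ (2*m - 2*j)
        * (\<Sum>k=0..2*j. (-1) ^ k * dirichlet_beta (k+1) * dirichlet_beta (2*j - k + 1)))"
    unfolding series_swap SB_def[symmetric] powi_m1 CC_def sum_distrib_left
    by (intro sum.cong refl) (simp add: field_simps)
  show ?thesis using main_integral[of m] unfolding eq .
qed

end
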